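(* Let $q\geq2$ and $0<\alpha<1/q$. A randomized Anti-$q$-SG algorithm which on every input of length $n$ incurs an expected cost of at most $\alpha n$ must read at least $$b\geq K_{1/q}(\alpha)\,n=(1-h_q(1-\alpha))\,n\log_2 q$$ bits of advice.
   Context: Anti-$q$-SG (anti-string guessing) is the repeated matrix game with the $q\times q$ identity cost matrix: inputs $(n,x_1,\dots,x_n)$ with $x_i\in[q]$; in round $i$ the algorithm knows $n,x_1,\dots,x_{i-1}$ and outputs $y_i\in[q]$, paying $1$ if $y_i=x_i$ and $0$ otherwise; $n$ is the length. Advice is read from an infinite tape prepared by an oracle knowing the input; a randomized algorithm with advice is a probability distribution over deterministic algorithms with advice. $K_y(x)=x\log_2(x/y)+(1-x)\log_2((1-x)/(1-y))$; $h_q(x)=x\log_q(q-1)-x\log_qx-(1-x)\log_q(1-x)$. *)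

theory Defs
  imports "HOL-Probability.Probability"
begin

definition inputs :: "nat \<Rightarrow> nat \<Rightarrow> nat list set" where
  "inputs q n = {x. length x = n \<and> set x \<subseteq> {..<q}}"

text \<open>A deterministic online algorithm with advice: alg n xs t is the output y_i in round
  i = length xs + 1, given the length n, the previous requests xs = x_1..x_{i-1}, and the
  infinite advice tape t. An oracle maps the whole input to the advice tape.\<close>

definition cost :: "(nat \<Rightarrow> nat list \<Rightarrow> (nat \<Rightarrow> bool) \<Rightarrow> nat) \<Rightarrow> (nat list \<Rightarrow> (nat \<Rightarrow> bool))
    \<Rightarrow> nat list \<Rightarrow> nat" where
  "cost alg orc x = card {i. i < length x \<and> alg (length x) (take i x) (orc x) = x ! i}"

text \<open>The algorithm (with its oracle) reads at most b advice bits on inputs of length n: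
  on every such input, the run is unchanged if the tape is altered beyond its first b bits
  (the tape is read sequentially, so this is what reading at most b bits amounts to).\<close>
definition reads_at_most ::
  "(nat \<Rightarrow> nat list \<Rightarrow> (nat \<Rightarrow> bool) \<Rightarrow> nat) \<Rightarrow> (nat list \<Rightarrow> (nat \<Rightarrow> bool)) \<Rightarrow> nat \<Rightarrow> nat \<Rightarrow> nat \<Rightarrow> bool"
  where
  "reads_at_most alg orc q n b \<longleftrightarrow>
     (\<forall>x\<in>inputs q n. \<forall>t. (\<forall>j<b. t j = orc x j) \<longrightarrow>
        (\<forall>i<n. alg n (take i x) t = alg n (take i x) (orc x)))"

definition K :: "real \<Rightarrow> real \<Rightarrow> real" where
  "K y x = x * log 2 (x / y) + (1 - x) * log 2 ((1 - x) / (1 - y))"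

definition h :: "nat \<Rightarrow> real \<Rightarrow> real" where
  "h q x = x * log (real q) (real q - 1) - x * log (real q) x - (1 - x) * log (real q) (1 - x)"

end

theory Submission imports Defs begin

fun cnt :: "(nat list \<Rightarrow> nat) \<Rightarrow> nat list \<Rightarrow> nat" where
  "cnt f [] = 0"
| "cnt f (a#y) = (if f [] = a then 1 else 0) + cnt (\<lambda>ys. f (a#ys)) y"

lemma cnt_eq: "cnt f x = card {i. i < length x \<and> f (take i x) = x!i}"
proof (induction x arbitrary: f)
  case Nil then show ?case by simp
next
  case (Cons a y)
  have S: "{i. i < length (a#y) \<and> f (take i (a#y)) = (a#y)!i}
     = (if f [] = a then {0} else {}) \<union> Suc ` {i. i < length y \<and> f (a # take i y) = y!i}"
    by (auto simp: image_iff less_Suc_eq_0_disj split: if_splits)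
  have "card (Suc ` {i. i < length y \<and> f (a # take i y) = y!i}) = card {i. i < length y \<and> f (a # take i y) = y!i}"
    by (simp add: card_image)
  then show ?case using Cons.IH[of "\<lambda>ys. f (a#ys)"]
    by (subst S) (auto simp: card_insert_if)
qed

lemma inputs_Suc: "inputs q (Suc n) = (\<lambda>(a,y). a#y) ` ({..<q} \<times> inputs q n)"
  unfolding inputs_def by (auto simp: length_Suc_conv image_iff)

lemma finite_inputs: "finite (inputs q n)"
proof -
  have "inputs q n = {xs. set xs \<subseteq> {..<q} \<and> length xs = n}" unfolding inputs_def by auto
  then show ?thesis using finite_lists_length_eq[of "{..<q}" n] by simp
qed

lemma card_inputs: "card (inputs q n) = q ^ n"
proof -
  have "inputs q n = {xs. set xs \<subseteq> {..<q} \<and> length xs = n}" unfolding inputs_def by auto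
  then show ?thesis using card_lists_length_eq[of "{..<q}" n] by simp
qed

lemma sum_delta_if: "c < q \<Longrightarrow> (\<Sum>a<q. (if c = a then (l::real) else 1)) = real q - 1 + l"
proof -
  assume c: "c < q"
  have "(\<Sum>a<q. (if c = a then l else 1)) = (\<Sum>a<q. 1 + (if c = a then l - 1 else 0))"
    by (rule sum.cong) auto
  also have "\<dots> = real q + (l - 1)" using c by (simp add: sum.distrib)
  finally show ?thesis by simp
qed

lemma sum_cnt: "(\<forall>xs. f xs < q) \<Longrightarrow> (\<Sum>x\<in>inputs q n. (l::real) ^ cnt f x) = (real q - 1 + l) ^ n"
proof (induction n arbitrary: f)
  case 0
  have "inputs q 0 = {[]}" unfolding inputs_def by auto
  then show ?case by simp
next
  case (Suc n)
  have inj: "inj_on (\<lambda>(a,y). a#y) ({..<q} \<times> inputs q n)" by (auto simp: inj_on_def)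
  have "(\<Sum>x\<in>inputs q (Suc n). l ^ cnt f x) = (\<Sum>(a,y)\<in>{..<q} \<times> inputs q n. l ^ cnt f (a#y))"
    unfolding inputs_Suc by (subst sum.reindex[OF inj]) (simp add: case_prod_unfold)
  also have "\<dots> = (\<Sum>a<q. \<Sum>y\<in>inputs q n. l ^ cnt f (a#y))"
    by (simp add: sum.cartesian_product)
  also have "\<dots> = (\<Sum>a<q. (if f [] = a then l else 1) * (\<Sum>y\<in>inputs q n. l ^ cnt (\<lambda>ys. f (a#ys)) y))"
    by (rule sum.cong) (auto simp: sum_distrib_left power_add)
  also have "\<dots> = (\<Sum>a<q. (if f [] = a then l else 1) * (real q - 1 + l) ^ n)"
    using Suc by simp
  also have "\<dots> = (real q - 1 + l) * (real q - 1 + l) ^ n"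
    by (simp add: sum_distrib_right[symmetric] sum_delta_if Suc.prems)
  finally show ?case by simp
qed

lemma det_bound:
  assumes out: "\<forall>m xs t. alg m xs t < q" and rd: "reads_at_most alg orc q n b"
    and l: "0 \<le> l" and q: "q \<ge> 1"
  shows "(\<Sum>x\<in>inputs q n. (l::real) ^ cost alg orc x) \<le> 2^b * (real q - 1 + l)^n"
proof -
  define p where "p x = (\<lambda>j. j < b \<and> orc x j)" for x
  define T where "T = p ` inputs q n"
  have fT: "finite T" unfolding T_def using finite_inputs by simp
  have cT: "card T \<le> 2^b"
  proof -
    have "T \<subseteq> (\<lambda>s j. j \<in> s) ` Pow {..<b}"
      unfolding T_def p_def
    proof (clarsimp simp: image_iff)
      fix x show "\<exists>s\<in>Pow {..<b}. (\<lambda>j. j < b \<and> orc x j) = (\<lambda>j. j \<in> s)"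
        by (rule bexI[of _ "{j. j < b \<and> orc x j}"]) (auto simp: fun_eq_iff)
    qed
    then have "card T \<le> card ((\<lambda>s j. j \<in> s) ` Pow {..<b})" by (intro card_mono) auto
    also have "\<dots> \<le> card (Pow {..<b::nat})" by (rule card_image_le) simp
    finally show ?thesis by (simp add: card_Pow)
  qed
  have ce: "cost alg orc x = cnt (\<lambda>xs. alg n xs (p x)) x" if x: "x \<in> inputs q n" for x
  proof -
    have len: "length x = n" using x unfolding inputs_def by simp
    have pj: "\<forall>j<b. p x j = orc x j" unfolding p_def by simp
    have A: "\<forall>i<n. alg n (take i x) (p x) = alg n (take i x) (orc x)"
      using rd x pj unfolding reads_at_most_def by blast
    have "{i. i < length x \<and> alg (length x) (take i x) (orc x) = x ! i}
        = {i. i < length x \<and> alg n (take i x) (p x) = x ! i}"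
    proof (rule Collect_cong)
      fix i show "(i < length x \<and> alg (length x) (take i x) (orc x) = x ! i)
         = (i < length x \<and> alg n (take i x) (p x) = x ! i)"
        using A len by metis
    qed
    then show ?thesis unfolding cost_def cnt_eq by simp
  qed
  have "(\<Sum>x\<in>inputs q n. l ^ cost alg orc x) \<le> (\<Sum>x\<in>inputs q n. \<Sum>t\<in>T. l ^ cnt (\<lambda>xs. alg n xs t) x)"
  proof (rule sum_mono)
    fix x assume x: "x \<in> inputs q n"
    have "p x \<in> T" unfolding T_def using x by simp
    then show "l ^ cost alg orc x \<le> (\<Sum>t\<in>T. l ^ cnt (\<lambda>xs. alg n xs t) x)"
      unfolding ce[OF x] using l fT by (intro member_le_sum) auto
  qed
  also have "\<dots> = (\<Sum>t\<in>T. \<Sum>x\<in>inputs q n. l ^ cnt (\<lambda>xs. alg n xs t) x)" by (rule sum.swap)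
  also have "\<dots> = (\<Sum>t\<in>T. (real q - 1 + l)^n)" using out by (simp add: sum_cnt)
  also have "\<dots> = real (card T) * (real q - 1 + l)^n" by simp
  also have "\<dots> \<le> 2^b * (real q - 1 + l)^n"
    proof (rule mult_right_mono)
    have "real (card T) \<le> real (2^b)" using cT by (simp only: of_nat_le_iff)
    then show "real (card T) \<le> 2^b" by simp
    show "0 \<le> (real q - 1 + l)^n" using q l by simp
  qed
  finally show ?thesis .
qed

lemma jensen_exp:
  assumes "finite X" "X \<noteq> {}"
  shows "real (card X) * exp ((\<Sum>x\<in>X. z x) / real (card X)) \<le> (\<Sum>x\<in>X. exp (z x))"
proof -
  define m where "m = (\<Sum>x\<in>X. z x) / real (card X)"
  have N: "real (card X) > 0" using assms by (simp add: card_gt_0_iff)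
  have "(\<Sum>x\<in>X. exp m * (1 + (z x - m))) \<le> (\<Sum>x\<in>X. exp (z x))"
  proof (rule sum_mono)
    fix x
    have "exp m * (1 + (z x - m)) \<le> exp m * exp (z x - m)"
      by (intro mult_left_mono) (auto simp: exp_ge_add_one_self)
    then show "exp m * (1 + (z x - m)) \<le> exp (z x)" by (simp add: exp_diff)
  qed
  moreover have "(\<Sum>x\<in>X. exp m * (1 + (z x - m))) = exp m * (real (card X) + (\<Sum>x\<in>X. z x) - real (card X) * m)"
  proof -
    have "(\<Sum>x\<in>X. exp m * (1 + (z x - m))) = exp m * (\<Sum>x\<in>X. (1 + (z x - m)))"
      by (rule sum_distrib_left[symmetric])
    also have "(\<Sum>x\<in>X. (1 + (z x - m))) = real (card X) + (\<Sum>x\<in>X. z x) - real (card X) * m"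
      by (simp add: sum.distrib sum_subtractf)
    finally show ?thesis .
  qed
  moreover have "real (card X) * m = (\<Sum>x\<in>X. z x)" unfolding m_def using N by simp
  ultimately show ?thesis unfolding m_def[symmetric] by (simp only: mult.commute) simp
qed

lemma K_ln:
  assumes q: "q \<ge> 2" and a: "0 < \<alpha>" "\<alpha> < 1 / real q"
  shows "K (1 / real q) \<alpha> = (ln (real q) + \<alpha> * ln \<alpha> + (1 - \<alpha>) * ln (1 - \<alpha>) - (1 - \<alpha>) * ln (real q - 1)) / ln 2"
proof -
  have q2: "real q \<ge> 2" using q by simp
  have q0: "real q > 0" using q2 by linarith
  have q1: "real q - 1 > 0" using q2 by linarith
  have "1 / real q < 1" using q2 by (simp add: divide_less_eq)
  then have a1: "1 - \<alpha> > 0" using a by linarith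
  have e1: "\<alpha> / (1 / real q) = \<alpha> * real q" by simp
  have e3: "1 - 1 / real q = (real q - 1) / real q" using q0 by (simp add: diff_divide_distrib)
  have e2: "(1 - \<alpha>) / (1 - 1 / real q) = (1 - \<alpha>) * real q / (real q - 1)"
    unfolding e3 by simp
  have l1: "ln (\<alpha> * real q) = ln \<alpha> + ln (real q)" using a(1) q0 by (simp add: ln_mult)
  have l2: "ln ((1 - \<alpha>) * real q / (real q - 1)) = ln (1 - \<alpha>) + ln (real q) - ln (real q - 1)"
  proof -
    have "ln ((1 - \<alpha>) * real q / (real q - 1)) = ln ((1 - \<alpha>) * real q) - ln (real q - 1)"
      using a1 q0 q1 by (simp add: ln_div)
    also have "ln ((1 - \<alpha>) * real q) = ln (1 - \<alpha>) + ln (real q)" using a1 q0 by (simp add: ln_mult)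
    finally show ?thesis .
  qed
  have "K (1 / real q) \<alpha> = (\<alpha> * (ln \<alpha> + ln (real q)) + (1 - \<alpha>) * (ln (1 - \<alpha>) + ln (real q) - ln (real q - 1))) / ln 2"
    unfolding K_def log_def e1 e2 l1 l2 by (simp add: add_divide_distrib diff_divide_distrib distrib_left right_diff_distrib)
  also have "\<dots> = (ln (real q) + \<alpha> * ln \<alpha> + (1 - \<alpha>) * ln (1 - \<alpha>) - (1 - \<alpha>) * ln (real q - 1)) / ln 2"
    by (simp add: algebra_simps)
  finally show ?thesis .
qed

lemma alg_aux: "(L::real) \<noteq> 0 \<Longrightarrow> (1 - (x*(A/L) - x*(B/L) - (1-x)*(C/L))) * (L/T) = (L - x*A + x*B + (1-x)*C)/T"
proof -
  assume L: "L \<noteq> 0"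
  have "(1 - (x*(A/L) - x*(B/L) - (1-x)*(C/L))) * L = L - x*A + x*B + (1-x)*C"
    using L by (simp add: field_simps)
  then show ?thesis by (metis times_divide_eq_right)
qed

lemma K_h:
  assumes q: "q \<ge> 2" and a: "0 < \<alpha>" "\<alpha> < 1 / real q"
  shows "K (1 / real q) \<alpha> = (1 - h q (1 - \<alpha>)) * log 2 (real q)"
proof -
  have lq: "ln (real q) \<noteq> 0" using q by simp
  have "(1 - h q (1 - \<alpha>)) * log 2 (real q) = (ln (real q) - (1-\<alpha>)*ln (real q - 1) + (1-\<alpha>)*ln (1-\<alpha>) + (1-(1-\<alpha>))*ln (1-(1-\<alpha>)))/ln 2"
    unfolding h_def log_def by (rule alg_aux[OF lq])
  also have "\<dots> = (ln (real q) + \<alpha> * ln \<alpha> + (1 - \<alpha>) * ln (1 - \<alpha>) - (1 - \<alpha>) * ln (real q - 1)) / ln 2"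
    by (simp only: diff_diff_eq2 diff_self add_0) (simp add: algebra_simps)
  finally show ?thesis unfolding K_ln[OF assms] by (rule sym)
qed

theorem theorem10:
  fixes q n b :: nat and \<alpha> :: real and M :: "'r measure"
    and A :: "'r \<Rightarrow> nat \<Rightarrow> nat list \<Rightarrow> (nat \<Rightarrow> bool) \<Rightarrow> nat"
    and Orc :: "'r \<Rightarrow> nat list \<Rightarrow> (nat \<Rightarrow> bool)"
  assumes "q \<ge> 2" and "0 < \<alpha>" and "\<alpha> < 1 / real q"
    and "prob_space M"
    and "\<forall>r\<in>space M. \<forall>m xs t. A r m xs t < q"
    and "\<forall>x\<in>inputs q n. (\<lambda>r. real (cost (A r) (Orc r) x)) \<in> borel_measurable M"
    and "\<forall>x\<in>inputs q n. (\<integral>r. real (cost (A r) (Orc r) x) \<partial>M) \<le> \<alpha> * real n"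
    and "\<forall>r\<in>space M. reads_at_most (A r) (Orc r) q n b"
  shows "K (1 / real q) \<alpha> * real n \<le> real b
       \<and> K (1 / real q) \<alpha> * real n = (1 - h q (1 - \<alpha>)) * real n * log 2 (real q)"
proof
  show "K (1 / real q) \<alpha> * real n = (1 - h q (1 - \<alpha>)) * real n * log 2 (real q)"
    using K_h[OF assms(1-3)] by simp
next
  note q = assms(1) and a = assms(2,3)
  interpret P: prob_space M by (rule assms(4))
  define I where "I = inputs q n"
  have fI: "finite I" unfolding I_def by (rule finite_inputs)
  have cI: "card I = q ^ n" unfolding I_def by (rule card_inputs)
  have q2: "real q \<ge> 2" using q by simp
  have Npos: "real (card I) > 0" using cI q by simp
  have cost_le: "cost alg orc x \<le> length x" for alg orc x
  proof -
    have "{i. i < length x \<and> alg (length x) (take i x) (orc x) = x ! i} \<subseteq> {..<length x}" by auto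
    then show ?thesis unfolding cost_def by (metis card_lessThan card_mono finite_lessThan)
  qed
  have integ: "integrable M (\<lambda>r. real (cost (A r) (Orc r) x))" if x: "x \<in> I" for x
  proof (rule P.integrable_const_bound[where B = "real (length x)"])
    show "AE r in M. norm (real (cost (A r) (Orc r) x)) \<le> real (length x)"
      using cost_le by simp
    show "(\<lambda>r. real (cost (A r) (Orc r) x)) \<in> borel_measurable M"
      using assms(6) x unfolding I_def by blast
  qed
  define G where "G r = (\<Sum>x\<in>I. real (cost (A r) (Orc r) x))" for r
  define c where "c = real (card I) * (\<alpha> * real n)"
  have intG: "integrable M G" unfolding G_def using integ by (intro Bochner_Integration.integrable_sum) auto
  have "(\<integral>r. G r \<partial>M) = (\<Sum>x\<in>I. (\<integral>r. real (cost (A r) (Orc r) x) \<partial>M))"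
    unfolding G_def using integ by (intro Bochner_Integration.integral_sum) auto
  also have "\<dots> \<le> (\<Sum>x\<in>I. \<alpha> * real n)" using assms(7) unfolding I_def by (intro sum_mono) auto
  finally have intle: "(\<integral>r. G r \<partial>M) \<le> c" unfolding c_def by simp
  have "\<exists>r\<in>space M. G r \<le> c"
  proof (rule ccontr)
    assume "\<not> ?thesis"
    then have gt: "\<forall>r\<in>space M. G r > c" by auto
    have "\<forall>r\<in>space M. real_of_int (\<lfloor>c\<rfloor> + 1) \<le> G r"
    proof
      fix r assume r: "r \<in> space M"
      have "G r = real (\<Sum>x\<in>I. cost (A r) (Orc r) x)" unfolding G_def by simp
      then obtain k :: nat where k: "G r = real k" by blast
      have "c < real k" using gt r k by auto
      moreover have "real_of_int \<lfloor>c\<rfloor> \<le> c" by (rule of_int_floor_le)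
      ultimately have "real_of_int \<lfloor>c\<rfloor> < real k" by linarith
      then have "\<lfloor>c\<rfloor> < int k" by (metis of_int_less_iff of_int_of_nat_eq)
      then have "\<lfloor>c\<rfloor> + 1 \<le> int k" by simp
      then have "real_of_int (\<lfloor>c\<rfloor> + 1) \<le> real_of_int (int k)" by (simp only: of_int_le_iff)
      then show "real_of_int (\<lfloor>c\<rfloor> + 1) \<le> G r" using k by simp
    qed
    then have "real_of_int (\<lfloor>c\<rfloor> + 1) \<le> (\<integral>r. G r \<partial>M)"
      by (intro P.integral_ge_const intG) auto
    moreover have "c < real_of_int (\<lfloor>c\<rfloor> + 1)" by simp
    ultimately show False using intle by linarith
  qed
  then obtain r where r: "r \<in> space M" and Gr: "G r \<le> c" by blast
  define l where "l = \<alpha> * (real q - 1) / (1 - \<alpha>)"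
  have "1 / real q < 1" using q2 by (simp add: divide_less_eq)
  then have a1: "1 - \<alpha> > 0" using a by linarith
  have l0: "l > 0" unfolding l_def using a a1 q2 by simp
  have "\<alpha> * real q < 1" using a q2 by (simp add: less_divide_eq mult.commute)
  then have "\<alpha> * (real q - 1) < 1 - \<alpha>" by (simp add: algebra_simps)
  then have l1: "l < 1" unfolding l_def using a1 by simp
  have ql: "real q - 1 + l = (real q - 1) / (1 - \<alpha>)"
    unfolding l_def using a1 by (simp add: field_simps)
  define cs where "cs x = cost (A r) (Orc r) x" for x
  have det: "(\<Sum>x\<in>I. l ^ cs x) \<le> 2^b * (real q - 1 + l)^n"
    unfolding I_def cs_def using det_bound[of "A r" q "Orc r" n b l] assms(5,8) r l0 q by auto
  have J: "real (card I) * exp ((\<Sum>x\<in>I. real (cs x) * ln l) / real (card I)) \<le> (\<Sum>x\<in>I. exp (real (cs x) * ln l))"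
    using jensen_exp[OF fI] Npos by fastforce
  have e: "exp (real k * ln l) = l ^ k" for k
    using l0 by (simp add: exp_of_nat_mult)
  have "(\<Sum>x\<in>I. real (cs x) * ln l) / real (card I) = ln l * (G r / real (card I))"
    unfolding G_def cs_def by (simp add: sum_distrib_left mult.commute)
  also have "\<dots> \<ge> ln l * (\<alpha> * real n)"
  proof (rule mult_left_mono_neg)
    show "ln l \<le> 0" using l0 l1 by simp
    show "G r / real (card I) \<le> \<alpha> * real n" using Gr Npos unfolding c_def by (simp add: divide_le_eq mult.commute)
  qed
  finally have lb: "ln l * (\<alpha> * real n) \<le> (\<Sum>x\<in>I. real (cs x) * ln l) / real (card I)" .
  have "real (card I) * exp (ln l * (\<alpha> * real n)) \<le> real (card I) * exp ((\<Sum>x\<in>I. real (cs x) * ln l) / real (card I))"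
    using lb Npos by simp
  also have "\<dots> \<le> (\<Sum>x\<in>I. l ^ cs x)" using J e by simp
  also have "\<dots> \<le> 2^b * (real q - 1 + l)^n" by (rule det)
  finally have main: "real (card I) * exp (ln l * (\<alpha> * real n)) \<le> 2^b * (real q - 1 + l)^n" .
  have ql0: "real q - 1 + l > 0" using l0 q2 by linarith
  have "ln (real (card I) * exp (ln l * (\<alpha> * real n))) \<le> ln (2^b * (real q - 1 + l)^n)"
    using main Npos ql0 by (subst ln_le_cancel_iff) auto
  moreover have "ln (real (card I) * exp (ln l * (\<alpha> * real n))) = real n * ln (real q) + ln l * (\<alpha> * real n)"
    using Npos q2 by (simp add: ln_mult cI ln_realpow)
  moreover have "ln (2^b * (real q - 1 + l)^n) = real b * ln 2 + real n * ln (real q - 1 + l)"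
    using ql0 by (simp add: ln_mult ln_realpow)
  ultimately have ineq: "real n * ln (real q) + ln l * (\<alpha> * real n) \<le> real b * ln 2 + real n * ln (real q - 1 + l)"
    by simp
  have q1: "real q - 1 > 0" using q2 by linarith
  have lnl: "ln l = ln \<alpha> + ln (real q - 1) - ln (1 - \<alpha>)"
    unfolding l_def using a q1 a1 by (simp add: ln_mult ln_div)
  have lnql: "ln (real q - 1 + l) = ln (real q - 1) - ln (1 - \<alpha>)"
    unfolding ql using q1 a1 by (simp add: ln_div)
  have "K (1 / real q) \<alpha> * real n = (real n * (ln (real q) + \<alpha> * ln \<alpha> + (1 - \<alpha>) * ln (1 - \<alpha>) - (1 - \<alpha>) * ln (real q - 1))) / ln 2"
    unfolding K_ln[OF q a] by simp
  also have "\<dots> \<le> real b"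
  proof -
    have "real n * (ln (real q) + \<alpha> * ln \<alpha> + (1 - \<alpha>) * ln (1 - \<alpha>) - (1 - \<alpha>) * ln (real q - 1))
      = real n * ln (real q) + ln l * (\<alpha> * real n) - real n * ln (real q - 1 + l)"
      unfolding lnl lnql by (simp add: algebra_simps)
    also have "\<dots> \<le> real b * ln 2" using ineq by linarith
    finally show ?thesis by (simp add: divide_le_eq)
  qed
  finally show "K (1 / real q) \<alpha> * real n \<le> real b" .
qed

end
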